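(* Let $n$ be a positive integer and let $X,Y$ be two i.i.d. random vectors taking values in $[0,1]^n$. For every $\epsilon\in(0,1]$, $$\mathbb P\Big[\max_{i}|X_i-Y_i|\ge\epsilon\Big]\le1-\Big(\frac{\epsilon}{2}\Big)^n.$$ *)

theory Defs
  imports "HOL-Probability.Probability"
begin

end

theory Submission imports Defs begin

lemma cs_aux:
  fixes p :: "'b \<Rightarrow> real"
  assumes "finite C" "C \<noteq> {}" "sum p C = 1"
  shows "1 / real (card C) \<le> (\<Sum>k\<in>C. p k * p k)"
proof -
  define N where "N = real (card C)"
  have N: "N > 0" using assms by (simp add: N_def card_gt_0_iff)
  have "0 \<le> (\<Sum>k\<in>C. (p k - 1/N)^2)" by (simp add: sum_nonneg)
  also have "\<dots> = (\<Sum>k\<in>C. p k * p k) - 2/N * sum p C + N * (1/N)^2"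
  proof -
    have "(\<Sum>k\<in>C. (p k - 1/N)^2) = (\<Sum>k\<in>C. (p k * p k - 2/N * p k) + (1/N)^2)"
      by (rule sum.cong) (simp_all add: power2_eq_square algebra_simps)
    also have "\<dots> = (\<Sum>k\<in>C. p k * p k) - (\<Sum>k\<in>C. 2/N * p k) + N * (1/N)^2"
      by (simp add: sum.distrib sum_subtractf N_def)
    finally show ?thesis by (simp add: sum_distrib_left)
  qed
  also have "\<dots> = (\<Sum>k\<in>C. p k * p k) - 1/N"
    using N assms(3) by (simp add: field_simps power2_eq_square)
  finally show ?thesis by (simp add: N_def)
qed

lemma cell_aux:
  fixes x y :: real and m :: nat
  assumes "m \<ge> 1" "0 \<le> x" "x \<le> 1" "0 \<le> y" "y \<le> 1"
    and "min (int m - 1) (floor (real m * x)) = min (int m - 1) (floor (real m * y))"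
  shows "\<bar>x - y\<bar> \<le> 1 / real m"
proof -
  have m: "real m > 0" using assms by simp
  have a: "real m * x \<le> real m" "real m * y \<le> real m" using assms m by (simp_all add: mult_left_le)
  have "\<bar>real m * x - real m * y\<bar> \<le> 1"
  proof (cases "floor (real m * x) \<ge> int m - 1")
    case True
    then have "floor (real m * y) \<ge> int m - 1" using assms(6) by (smt (verit, best))
    then have "real m * y \<ge> real m - 1" "real m * x \<ge> real m - 1" using True
      by (smt (verit) floor_le_iff of_int_1 of_int_diff of_int_of_nat_eq)+
    then show ?thesis using a by linarith
  next
    case False
    then have "floor (real m * y) = floor (real m * x)" using assms(6) by (smt (verit, best))
    then show ?thesis by (smt (verit) floor_eq_iff)
  qed
  moreover have "\<bar>real m * x - real m * y\<bar> = real m * \<bar>x - y\<bar>"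
    by (metis abs_mult abs_of_nat right_diff_distrib)
  ultimately have "real m * \<bar>x - y\<bar> \<le> 1" by simp
  then show ?thesis using m by (simp add: field_simps)
qed


theorem lemma9:
  fixes M :: "'a measure"
    and X Y :: "'a \<Rightarrow> real ^ 'n"
    and \<epsilon> :: real
  assumes "prob_space M"
    and "X \<in> borel_measurable M" and "Y \<in> borel_measurable M"
    and "prob_space.indep_var M borel X borel Y"
    and "distr M borel X = distr M borel Y"
    and "\<forall>\<omega>\<in>space M. \<forall>i. X \<omega> $ i \<in> {0..1}"
    and "\<forall>\<omega>\<in>space M. \<forall>i. Y \<omega> $ i \<in> {0..1}"
    and "0 < \<epsilon>" and "\<epsilon> \<le> 1"
  shows "measure M {\<omega> \<in> space M. (MAX i. \<bar>X \<omega> $ i - Y \<omega> $ i\<bar>) \<ge> \<epsilon>}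
           \<le> 1 - (\<epsilon> / 2) ^ CARD('n)"
proof -
  interpret P: prob_space M by fact
  note Xm = assms(2) and Ym = assms(3) and ind = assms(4) and dist = assms(5)
  define m :: nat where "m = nat (floor (1/\<epsilon>)) + 1"
  have m1: "m \<ge> 1" by (simp add: m_def)
  have f0: "floor (1/\<epsilon>) \<ge> 0" using assms(8) by simp
  have mr: "real m = real_of_int (floor (1/\<epsilon>)) + 1" unfolding m_def using f0 by simp
  have m_gt: "real m > 1/\<epsilon>" unfolding mr by linarith
  have m_le: "real m \<le> 2/\<epsilon>"
  proof -
    have "real m \<le> 1/\<epsilon> + 1" unfolding mr by linarith
    also have "1 \<le> 1/\<epsilon>" using assms(8,9) by simp
    ultimately show ?thesis by (simp add: field_simps)
  qed
  have inv_m: "1 / real m < \<epsilon>" using m_gt assms(8) m1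
    by (simp add: field_simps)
  define c where "c = (\<lambda>x::real^'n. \<lambda>i. min (int m - 1) (floor (real m * x $ i)))"
  define C where "C = PiE (UNIV::'n set) (\<lambda>_. {0..int m - 1})"
  define B where "B k = {x. c x = k}" for k
  have Bmeas: "B k \<in> sets borel" for k
  proof -
    have "B k = {x. \<forall>i. min (int m - 1) (floor (real m * x $ i)) = k i}"
      by (auto simp: fun_eq_iff B_def c_def)
    also have "\<dots> \<in> sets borel" by measurable
    finally show ?thesis .
  qed
  have finC: "finite C" unfolding C_def by (simp add: finite_PiE)
  have cardC: "card C = m ^ CARD('n)" unfolding C_def
    by (simp add: card_PiE)
  have cin: "c x \<in> C" if "\<forall>i. x $ i \<in> {0..1}" for x
  proof -
    have "c x i \<in> {0..int m - 1}" for i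
      using that m1 by (auto simp: c_def)
    then show ?thesis unfolding C_def c_def by auto
  qed
  define p where "p k = P.prob (X -` B k \<inter> space M)" for k
  have pY: "P.prob (Y -` B k \<inter> space M) = p k" for k
  proof -
    have "P.prob (Y -` B k \<inter> space M) = measure (distr M borel Y) (B k)"
      using Ym Bmeas by (simp add: measure_distr)
    also have "\<dots> = measure (distr M borel X) (B k)" using dist by simp
    also have "\<dots> = p k" using Xm Bmeas by (simp add: measure_distr p_def)
    finally show ?thesis .
  qed
  define E where "E = {\<omega>\<in>space M. c (X \<omega>) = c (Y \<omega>)}"
  define F where "F k = (\<lambda>\<omega>. (X \<omega>, Y \<omega>)) -` (B k \<times> B k) \<inter> space M" for k
  have Fm: "F k \<in> P.events" for k
  proof -
    have "F k = (X -` B k \<inter> space M) \<inter> (Y -` B k \<inter> space M)" by (auto simp: F_def)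
    then show ?thesis using measurable_sets[OF Xm Bmeas] measurable_sets[OF Ym Bmeas] by auto
  qed
  have EF: "E = (\<Union>k\<in>C. F k)"
  proof (intro equalityI subsetI)
    fix \<omega> assume "\<omega> \<in> E"
    then have w: "\<omega> \<in> space M" "c (X \<omega>) = c (Y \<omega>)" by (simp_all add: E_def)
    have "c (X \<omega>) \<in> C" using cin assms(6) w(1) by blast
    moreover have "\<omega> \<in> F (c (X \<omega>))" using w by (simp add: F_def B_def)
    ultimately show "\<omega> \<in> (\<Union>k\<in>C. F k)" by blast
  next
    fix \<omega> assume "\<omega> \<in> (\<Union>k\<in>C. F k)"
    then show "\<omega> \<in> E" by (auto simp: F_def B_def E_def)
  qed
  have Em: "E \<in> P.events" unfolding EF using Fm finC by auto
  have probE: "P.prob E = (\<Sum>k\<in>C. p k * p k)"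
  proof -
    have "P.prob E = (\<Sum>k\<in>C. P.prob (F k))" unfolding EF
      by (rule P.finite_measure_finite_Union) (use finC Fm in \<open>auto simp: disjoint_family_on_def F_def B_def\<close>)
    also have "\<dots> = (\<Sum>k\<in>C. p k * p k)"
    proof (rule sum.cong[OF refl])
      fix k
      show "P.prob (F k) = p k * p k"
        unfolding F_def using P.indep_varD[OF ind Bmeas Bmeas, of k k] pY[of k] by (simp add: p_def)
    qed
    finally show ?thesis .
  qed
  have sump: "sum p C = 1"
  proof -
    have Xm': "X -` B k \<inter> space M \<in> P.events" for k using measurable_sets[OF Xm Bmeas] .
    have "space M = (\<Union>k\<in>C. X -` B k \<inter> space M)"
    proof (intro equalityI subsetI)
      fix \<omega> assume w: "\<omega> \<in> space M"
      have "c (X \<omega>) \<in> C" using cin assms(6) w by blast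
      then show "\<omega> \<in> (\<Union>k\<in>C. X -` B k \<inter> space M)" using w by (auto simp: B_def)
    qed auto
    then have "P.prob (space M) = (\<Sum>k\<in>C. p k)"
    proof -
      have dj: "disjoint_family_on (\<lambda>k. X -` B k \<inter> space M) C"
        by (auto simp: disjoint_family_on_def B_def)
      have "P.prob (\<Union>k\<in>C. X -` B k \<inter> space M) = (\<Sum>k\<in>C. P.prob (X -` B k \<inter> space M))"
        by (rule P.finite_measure_finite_Union[OF finC _ dj]) (use Xm' in blast)
      then show ?thesis using \<open>space M = _\<close> by (simp add: p_def)
    qed
    then show ?thesis using P.prob_space by simp
  qed
  have Cne: "C \<noteq> {}" 
  proof -
    have "card C > 0" using cardC m1 by simp
    then show ?thesis by auto
  qed
  have lowE: "1 / real (card C) \<le> P.prob E" using cs_aux[OF finC Cne sump] probE by simp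
  have "(\<epsilon>/2) ^ CARD('n) \<le> (1 / real m) ^ CARD('n)"
    using m_le assms(8) m1 by (intro power_mono) (auto simp: field_simps)
  also have "\<dots> = 1 / real (card C)" by (simp add: cardC power_one_over)
  finally have key: "(\<epsilon>/2) ^ CARD('n) \<le> P.prob E" using lowE by simp
  have sub: "{\<omega> \<in> space M. (MAX i. \<bar>X \<omega> $ i - Y \<omega> $ i\<bar>) \<ge> \<epsilon>} \<subseteq> space M - E"
  proof clarify
    fix \<omega> assume w: "\<omega> \<in> space M" "\<epsilon> \<le> (MAX i. \<bar>X \<omega> $ i - Y \<omega> $ i\<bar>)" "\<omega> \<in> E"
    have "\<bar>X \<omega> $ i - Y \<omega> $ i\<bar> < \<epsilon>" for i
    proof -
      have "c (X \<omega>) i = c (Y \<omega>) i" using w(3) by (simp add: E_def)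
      then have "\<bar>X \<omega> $ i - Y \<omega> $ i\<bar> \<le> 1 / real m"
      proof -
        have "X \<omega> $ i \<in> {0..1}" "Y \<omega> $ i \<in> {0..1}" using assms(6,7) w(1) by blast+
        then show ?thesis using cell_aux[OF m1, of "X \<omega> $ i" "Y \<omega> $ i"] \<open>c (X \<omega>) i = c (Y \<omega>) i\<close>
          unfolding c_def by simp
      qed
      then show ?thesis using inv_m by simp
    qed
    moreover have "(MAX i. \<bar>X \<omega> $ i - Y \<omega> $ i\<bar>) \<in> range (\<lambda>i. \<bar>X \<omega> $ i - Y \<omega> $ i\<bar>)"
      by (rule Max_in) auto
    then obtain j where "(MAX i. \<bar>X \<omega> $ i - Y \<omega> $ i\<bar>) = \<bar>X \<omega> $ j - Y \<omega> $ j\<bar>" by blast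
    ultimately show False using w(2) by (metis not_less)
  qed
  have "measure M {\<omega> \<in> space M. (MAX i. \<bar>X \<omega> $ i - Y \<omega> $ i\<bar>) \<ge> \<epsilon>} \<le> P.prob (space M - E)"
    by (rule P.finite_measure_mono[OF sub]) (use Em in auto)
  also have "\<dots> = 1 - P.prob E" using P.prob_compl[OF Em] .
  finally show ?thesis using key by simp
qed

end
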